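(* Under the standing setup, for every $t>0$ there exists a sequence $(\pi_n)_{n\in\mathbb N}\subset P_t$ such that $\mathcal E_{\pi_n}u_0\nearrow\mathscr S(t)u_0$ as $n\to\infty$ for all $u_0\in\mathbb R^d$.
   Context: Standing setup: $d\in\mathbb N$; vectors in $\mathbb R^d$; inequalities and suprema of vectors are componentwise; reals are identified with constant vectors. A $Q$-matrix is $q\in\mathbb R^{d\times d}$ with $q_{ii}\le0$, $q_{ij}\ge0$ ($i\ne j$), $\sum_jq_{ij}=0$. Let $\mathcal P$ be a set of $Q$-matrices and $f=(f_q)_{q\in\mathcal P}\subset\mathbb R^d$ with $\sup_{q\in\mathcal P}f_q=f_{q_0}=0$ for some $q_0\in\mathcal P$, such that $\mathcal Qu:=\sup_{q\in\mathcal P}(qu+f_q)$ is finite for every $u\in\mathbb R^d$. For $q\in\mathcal P$, $t\ge0$: $S_q(t)u_0:=e^{tq}u_0+\int_0^te^{sq}f_q\,ds$. For $h\ge0$: $\mathcal E_hu_0:=\sup_{q\in\mathcal P}S_q(h)u_0$. $P$ is the set of finite subsets $\pi\subset[0,\infty)$ with $0\in\pi$; $P_t:=\{\pi\in P:\max\pi=t\}$. For $\pi=\{t_0,\dots,t_m\}$ with $0=t_0<\dots<t_m$, $m\ge1$, $\mathcal E_\pi:=\mathcal E_{t_1-t_0}\circ\cdots\circ\mathcal E_{t_m-t_{m-1}}$, and $\mathcal E_{\{0\}}:=\mathcal E_0$. The Nisio semigroup of $(\mathcal P,f)$ is $\mathscr S(t)u_0:=\sup_{\pi\in P_t}\mathcal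 E_\pi u_0$. *)

theory Defs
  imports "HOL-Analysis.Analysis"
begin

text \<open>Order and Sup on vectors are componentwise
  (library instances).\<close>

definition qmatrix :: "real^'d^'d \<Rightarrow> bool" where
  "qmatrix q \<longleftrightarrow> (\<forall>i. q$i$i \<le> 0) \<and> (\<forall>i j. i \<noteq> j \<longrightarrow> q$i$j \<ge> 0)
     \<and> (\<forall>i. (\<Sum>j\<in>UNIV. q$i$j) = 0)"

fun mpow :: "real^'d^'d \<Rightarrow> nat \<Rightarrow> real^'d^'d" where
  "mpow q 0 = mat 1"
| "mpow q (Suc k) = q ** mpow q k"

definition mexp :: "real^'d^'d \<Rightarrow> real^'d^'d" where
  "mexp A = (\<Sum>k. (1 / fact k) *\<^sub>R mpow A k)"

definition Sq :: "real^'d^'d \<Rightarrow> real^'d \<Rightarrow> real \<Rightarrow> real^'d \<Rightarrow> real^'d" where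
  "Sq q fq t u0 = mexp (t *\<^sub>R q) *v u0 + integral {0..t} (\<lambda>s. mexp (s *\<^sub>R q) *v fq)"

definition Eh :: "(real^'d^'d) set \<Rightarrow> (real^'d^'d \<Rightarrow> real^'d) \<Rightarrow> real \<Rightarrow> real^'d \<Rightarrow> real^'d" where
  "Eh P f h u0 = (SUP q\<in>P. Sq q (f q) h u0)"

fun Elist :: "(real^'d^'d) set \<Rightarrow> (real^'d^'d \<Rightarrow> real^'d) \<Rightarrow> real list \<Rightarrow> real^'d \<Rightarrow> real^'d" where
  "Elist P f (a # b # rest) u0 = Eh P f (b - a) (Elist P f (b # rest) u0)"
| "Elist P f _ u0 = u0"

definition partitions :: "real set set" where
  "partitions = {\<pi>. finite \<pi> \<and> \<pi> \<subseteq> {0..} \<and> 0 \<in> \<pi>}"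

definition partitions_t :: "real \<Rightarrow> real set set" where
  "partitions_t t = {\<pi> \<in> partitions. Max \<pi> = t}"

definition Epi :: "(real^'d^'d) set \<Rightarrow> (real^'d^'d \<Rightarrow> real^'d) \<Rightarrow> real set \<Rightarrow> real^'d \<Rightarrow> real^'d" where
  "Epi P f \<pi> u0 = (if \<pi> = {0} then Eh P f 0 u0 else Elist P f (sorted_list_of_set \<pi>) u0)"

definition Nisio :: "(real^'d^'d) set \<Rightarrow> (real^'d^'d \<Rightarrow> real^'d) \<Rightarrow> real \<Rightarrow> real^'d \<Rightarrow> real^'d" where
  "Nisio P f t u0 = (SUP \<pi>\<in>partitions_t t. Epi P f \<pi> u0)"

end

theory Submission
  imports Defs
begin


lemma binom_step:
  fixes X :: "nat \<Rightarrow> nat \<Rightarrow> 'a::real_vector"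
  shows "(\<Sum>k\<le>n. real (n choose k) *\<^sub>R X (Suc k) (n-k)) + (\<Sum>k\<le>n. real (n choose k) *\<^sub>R X k (Suc n - k))
     = (\<Sum>k\<le>Suc n. real (Suc n choose k) *\<^sub>R X k (Suc n - k))"
proof -
  define g where "g k = real (n choose k) *\<^sub>R X k (Suc n - k)" for k
  have g1: "(\<Sum>k\<le>Suc n. g k) = g 0 + (\<Sum>k\<le>n. g (Suc k))"
    by (rule sum.atMost_Suc_shift)
  have g2: "(\<Sum>k\<le>Suc n. g k) = (\<Sum>k\<le>n. g k)"
    by (simp add: g_def)
  have "(\<Sum>k\<le>Suc n. real (Suc n choose k) *\<^sub>R X k (Suc n - k))
      = X 0 (Suc n) + (\<Sum>k\<le>n. real (Suc n choose Suc k) *\<^sub>R X (Suc k) (n - k))"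
    by (subst sum.atMost_Suc_shift) simp
  also have "\<dots> = X 0 (Suc n) + (\<Sum>k\<le>n. real (n choose k) *\<^sub>R X (Suc k) (n - k))
       + (\<Sum>k\<le>n. g (Suc k))"
    by (simp add: g_def sum.distrib scaleR_add_left algebra_simps)
  also have "\<dots> = (\<Sum>k\<le>n. real (n choose k) *\<^sub>R X (Suc k) (n - k)) + (\<Sum>k\<le>n. g k)"
    using g1 g2 by (simp add: g_def algebra_simps)
  finally show ?thesis by (simp add: g_def)
qed



definition nrm :: "real^'d^'d \<Rightarrow> real" where
  "nrm A = (\<Sum>i\<in>UNIV. \<Sum>j\<in>UNIV. \<bar>A$i$j\<bar>)"

lemma nrm_nonneg: "0 \<le> nrm A"
  unfolding nrm_def by (intro sum_nonneg) auto

lemma row_le_nrm: "(\<Sum>l\<in>UNIV. \<bar>A$i$l\<bar>) \<le> nrm A"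
  unfolding nrm_def
  by (rule member_le_sum[where f="\<lambda>i. \<Sum>l\<in>UNIV. \<bar>A$i$l\<bar>"]) (auto intro: sum_nonneg)

lemma mpow_entry_bound: "\<bar>mpow A k $ i $ j\<bar> \<le> nrm A ^ k"
proof (induction k arbitrary: i j)
  case 0
  then show ?case by (simp add: mat_def)
next
  case (Suc k)
  have "\<bar>mpow A (Suc k) $ i $ j\<bar> = \<bar>\<Sum>l\<in>UNIV. A$i$l * mpow A k $ l $ j\<bar>"
    by (simp add: matrix_matrix_mult_def)
  also have "\<dots> \<le> (\<Sum>l\<in>UNIV. \<bar>A$i$l\<bar> * nrm A ^ k)"
    by (rule order_trans[OF sum_abs sum_mono]) (simp add: abs_mult Suc mult_left_mono)
  also have "\<dots> = (\<Sum>l\<in>UNIV. \<bar>A$i$l\<bar>) * nrm A ^ k"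
    by (simp add: sum_distrib_right)
  also have "\<dots> \<le> nrm A * nrm A ^ k"
    by (rule mult_right_mono[OF row_le_nrm]) (simp add: nrm_nonneg)
  finally show ?case by simp
qed

lemma norm_mat_le: "norm (M::real^'d^'d) \<le> (\<Sum>i\<in>UNIV. \<Sum>j\<in>UNIV. \<bar>M$i$j\<bar>)"
proof -
  have "norm M \<le> (\<Sum>i\<in>UNIV. norm (M$i))"
    unfolding norm_vec_def by (rule L2_set_le_sum) auto
  also have "\<dots> \<le> (\<Sum>i\<in>UNIV. \<Sum>j\<in>UNIV. \<bar>M$i$j\<bar>)"
    by (rule sum_mono) (rule norm_le_l1_cart)
  finally show ?thesis .
qed

lemma summable_exp_real: "summable (\<lambda>k. (x::real)^k / fact k)"
  using summable_exp_generic[of x] by (simp add: divide_inverse mult.commute)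

lemma mexp_summable: fixes A :: "real^'d^'d" shows "summable (\<lambda>k. (1 / fact k) *\<^sub>R mpow A k)"
proof (rule summable_norm_cancel, rule summable_comparison_test)
  define C where "C = real (CARD('d) * CARD('d))"
  show "summable (\<lambda>k. C * (nrm A ^ k / fact k))"
    by (intro summable_mult summable_exp_real)
  show "\<exists>N. \<forall>n\<ge>N. norm (norm ((1 / fact n) *\<^sub>R mpow A n)) \<le> C * (nrm A ^ n / fact n)"
  proof (intro exI allI impI)
    fix n :: nat
    have "norm ((1 / fact n) *\<^sub>R mpow A n) = (1 / fact n) * norm (mpow A n)"
      by simp
    also have "\<dots> \<le> (1 / fact n) * (\<Sum>i\<in>(UNIV::'d set). \<Sum>j\<in>(UNIV::'d set). nrm A ^ n)"
      by (intro mult_left_mono order_trans[OF norm_mat_le] sum_mono mpow_entry_bound) auto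
    also have "\<dots> = C * (nrm A ^ n / fact n)"
      by (simp add: C_def)
    finally show "norm (norm ((1 / fact n) *\<^sub>R mpow A n)) \<le> C * (nrm A ^ n / fact n)"
      by simp
  qed
qed

lemma mexp_sums: "(\<lambda>k. (1 / fact k) *\<^sub>R mpow A k) sums mexp A"
  unfolding mexp_def by (rule summable_sums[OF mexp_summable])

lemma mexp_entry_sums: "(\<lambda>k. (1 / fact k) * mpow A k $ i $ j) sums (mexp A $ i $ j)"
  using sums_vec_nth[OF sums_vec_nth[OF mexp_sums[of A]], of i j] by simp

lemma mexp_entry_abs_summable: "summable (\<lambda>k. \<bar>(1 / fact k) * mpow A k $ i $ j\<bar>)"
proof (rule summable_comparison_test[OF _ summable_exp_real[of "nrm A"]])
  show "\<exists>N. \<forall>n\<ge>N. norm \<bar>(1 / fact n) * mpow A n $ i $ j\<bar> \<le> nrm A ^ n / fact n"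
    using mpow_entry_bound[of A _ i j]
    by (auto simp: abs_mult divide_simps)
qed



lemma matrix_add_rdistrib': "((A::real^'n^'m) + B) ** C = A ** C + B ** C"
  by (vector matrix_matrix_mult_def sum.distrib[symmetric] field_simps)

lemma matrix_mul_sum_right: "(A::real^'n^'m) ** (\<Sum>k\<in>K. X k) = (\<Sum>k\<in>K. A ** X k)"
  by (induct K rule: infinite_finite_induct) (auto simp: matrix_add_ldistrib)

lemma mpow_comm:
  assumes "A ** B = B ** A"
  shows "mpow A n ** B = B ** mpow A n"
proof (induction n)
  case 0 then show ?case by simp
next
  case (Suc n)
  have "mpow A (Suc n) ** B = A ** (mpow A n ** B)" by (simp add: matrix_mul_assoc)
  also have "\<dots> = (A ** B) ** mpow A n" by (simp add: Suc matrix_mul_assoc)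
  also have "\<dots> = B ** mpow A (Suc n)" by (simp add: assms matrix_mul_assoc)
  finally show ?case .
qed

lemma mpow_binom:
  assumes AB: "A ** B = B ** A"
  shows "mpow (A + B) N = (\<Sum>n\<le>N. real (N choose n) *\<^sub>R (mpow A n ** mpow B (N - n)))"
proof (induction N)
  case 0 then show ?case by simp
next
  case (Suc N)
  define X where "X n m = mpow A n ** mpow B m" for n m
  have XA: "A ** X n m = X (Suc n) m" for n m by (simp add: X_def matrix_mul_assoc)
  have XB: "B ** X n m = X n (Suc m)" for n m
    by (simp add: X_def matrix_mul_assoc mpow_comm[OF AB])
  have "mpow (A + B) (Suc N) = A ** mpow (A+B) N + B ** mpow (A+B) N"
    by (simp add: matrix_add_rdistrib')
  also have "\<dots> = (\<Sum>k\<le>N. real (N choose k) *\<^sub>R X (Suc k) (N-k)) + (\<Sum>k\<le>N. real (N choose k) *\<^sub>R X k (Suc N - k))"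
    unfolding Suc
    by (auto simp add: matrix_mul_sum_right matrix_scalar_ac scalar_matrix_assoc[symmetric] XA XB Suc_diff_le
       simp flip: X_def intro!: sum.cong arg_cong2[where f="(+)"])
  also have "\<dots> = (\<Sum>k\<le>Suc N. real (Suc N choose k) *\<^sub>R X k (Suc N - k))"
    by (rule binom_step)
  finally show ?case by (simp add: X_def)
qed



lemma mexp_entry: "mexp A $ i $ j = (\<Sum>k. (1 / fact k) * mpow A k $ i $ j)"
  by (rule sums_unique[OF mexp_entry_sums])

lemma mexp_mult:
  assumes AB: "A ** B = B ** A"
  shows "mexp (A + B) = mexp A ** mexp B"
proof -
  have "mexp (A + B) $ i $ j = (mexp A ** mexp B) $ i $ j" for i j
  proof -
    define a where "a l k = (1 / fact k) * mpow A k $ i $ l" for l k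
    define b where "b l k = (1 / fact k) * mpow B k $ l $ j" for l k
    define c where "c l k = (\<Sum>n\<le>k. a l n * b l (k - n))" for l k
    have sa: "summable (\<lambda>k. norm (a l k))" for l
      using mexp_entry_abs_summable[of A i l] by (simp add: a_def)
    have sb: "summable (\<lambda>k. norm (b l k))" for l
      using mexp_entry_abs_summable[of B l j] by (simp add: b_def)
    have prod: "mexp A $ i $ l * mexp B $ l $ j = suminf (c l)" for l
      unfolding c_def mexp_entry a_def[symmetric] b_def[symmetric]
      by (rule Cauchy_product[OF sa sb])
    have sc: "summable (c l)" for l
      unfolding c_def by (rule summable_Cauchy_product[OF sa sb])
    have "(mexp A ** mexp B) $ i $ j = (\<Sum>l\<in>UNIV. suminf (c l))"
      by (simp add: matrix_matrix_mult_def prod)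
    also have "\<dots> = (\<Sum>k. \<Sum>l\<in>UNIV. c l k)"
      by (rule suminf_sum[symmetric]) (rule sc)
    also have "\<dots> = (\<Sum>k. (1 / fact k) * mpow (A + B) k $ i $ j)"
    proof (rule suminf_cong)
      fix k
      have "(1 / fact k) * mpow (A + B) k $ i $ j
          = (\<Sum>n\<le>k. (1 / fact k) * real (k choose n) * (\<Sum>l\<in>UNIV. mpow A n $ i $ l * mpow B (k - n) $ l $ j))"
        by (simp add: mpow_binom[OF AB] matrix_matrix_mult_def sum_distrib_left mult.assoc)
      also have "\<dots> = (\<Sum>n\<le>k. \<Sum>l\<in>UNIV. a l n * b l (k - n))"
      proof (rule sum.cong[OF refl])
        fix n assume "n \<in> {..k}"
        then have nk: "n \<le> k" by simp
        have fk: "(1 / fact k) * real (k choose n) = 1 / (fact n * fact (k - n))"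
          using binomial_fact[OF nk, where 'a=real] by (simp add: field_simps)
        show "(1 / fact k) * real (k choose n) * (\<Sum>l\<in>UNIV. mpow A n $ i $ l * mpow B (k - n) $ l $ j)
              = (\<Sum>l\<in>UNIV. a l n * b l (k - n))"
          unfolding fk sum_distrib_left a_def b_def by (intro sum.cong refl) simp
      qed
      also have "\<dots> = (\<Sum>l\<in>UNIV. c l k)"
        unfolding c_def by (rule sum.swap)
      finally show "(\<Sum>l\<in>UNIV. c l k) = (1 / fact k) * mpow (A + B) k $ i $ j" by simp
    qed
    also have "\<dots> = mexp (A + B) $ i $ j" by (simp add: mexp_entry)
    finally show ?thesis by simp
  qed
  then show ?thesis by (simp add: vec_eq_iff)
qed



lemma mpow_scale: "mpow (s *\<^sub>R A) k = s ^ k *\<^sub>R mpow A k"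
  by (induction k) (simp_all add: matrix_scalar_ac scalar_matrix_assoc[symmetric])

lemma mpow_one: "mpow (mat 1) k = mat 1"
  by (induction k) simp_all

lemma mexp_entry_scale_sums:
  "(\<lambda>k. (mpow q k $ i $ j / fact k) * s ^ k) sums (mexp (s *\<^sub>R q) $ i $ j)"
  using mexp_entry_sums[of "s *\<^sub>R q" i j] by (simp add: mpow_scale mult_ac)

lemma isCont_mexp_entry: "isCont (\<lambda>s. mexp (s *\<^sub>R q) $ i $ j) s"
proof -
  have "isCont (\<lambda>x. \<Sum>n. (mpow q n $ i $ j / fact n) * x ^ n) s"
    by (rule isCont_powser_converges_everywhere) (use mexp_entry_scale_sums sums_summable in blast)
  moreover have "(\<lambda>x. \<Sum>n. (mpow q n $ i $ j / fact n) * x ^ n) = (\<lambda>s. mexp (s *\<^sub>R q) $ i $ j)"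
    by (rule ext, rule sums_unique[OF mexp_entry_scale_sums, symmetric])
  ultimately show ?thesis by simp
qed

lemma continuous_on_mexp_mv: "continuous_on S (\<lambda>s. mexp (s *\<^sub>R q) *v v)"
proof -
  have eq: "(\<lambda>s. mexp (s *\<^sub>R q) *v v) = (\<lambda>s. \<chi> i. \<Sum>j\<in>UNIV. mexp (s *\<^sub>R q) $ i $ j * v $ j)"
    by (simp add: matrix_vector_mult_def)
  have "continuous_on S (\<lambda>s. \<chi> i. \<Sum>j\<in>UNIV. mexp (s *\<^sub>R q) $ i $ j * v $ j)"
    by (intro continuous_on_vec_lambda continuous_on_sum continuous_on_mult continuous_on_const
        continuous_at_imp_continuous_on ballI isCont_mexp_entry)
  then show ?thesis unfolding eq .
qed

lemma mexp_scalar: "mexp (c *\<^sub>R mat 1) = exp c *\<^sub>R (mat 1 :: real^'d^'d)"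
proof -
  have eq: "(\<lambda>k. (1 / fact k) *\<^sub>R mpow (c *\<^sub>R mat 1) k) = (\<lambda>k. (c ^ k /\<^sub>R fact k) *\<^sub>R (mat 1 :: real^'d^'d))"
    by (simp add: mpow_scale mpow_one divide_inverse mult.commute)
  have "(\<lambda>k. (c ^ k /\<^sub>R fact k) *\<^sub>R (mat 1 :: real^'d^'d)) sums (exp c *\<^sub>R mat 1)"
    by (rule sums_scaleR_left[OF exp_converges])
  then have "(\<lambda>k. (1 / fact k) *\<^sub>R mpow (c *\<^sub>R (mat 1 :: real^'d^'d)) k) sums (exp c *\<^sub>R mat 1)"
    unfolding eq .
  from sums_unique2[OF mexp_sums this] show ?thesis .
qed

lemma mpow_nonneg: "(\<And>i j. 0 \<le> A$i$j) \<Longrightarrow> 0 \<le> mpow A k $ i $ j"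
  by (induction k arbitrary: i j) (auto simp: mat_def matrix_matrix_mult_def intro!: sum_nonneg)

lemma mexp_nonneg: "(\<And>i j. 0 \<le> A$i$j) \<Longrightarrow> 0 \<le> mexp A $ i $ j"
  unfolding mexp_entry
  by (rule suminf_nonneg[OF sums_summable[OF mexp_entry_sums]]) (simp add: mpow_nonneg)

lemma entry_le_nrm: "\<bar>A $ i $ j\<bar> \<le> nrm A"
  using mpow_entry_bound[of A 1 i j] by simp

lemma qmatrix_exp_nonneg:
  assumes q: "qmatrix q" and h: "0 \<le> h"
  shows "0 \<le> mexp (h *\<^sub>R q) $ i $ j"
proof -
  define r where "r = q + nrm q *\<^sub>R mat 1"
  have r0: "0 \<le> r $ i $ j" for i j
  proof (cases "i = j")
    case True then show ?thesis using entry_le_nrm[of q j j] by (simp add: r_def mat_def)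
  next
    case False then show ?thesis using q by (simp add: r_def mat_def qmatrix_def)
  qed
  define c where "c = - (h * nrm q)"
  have eq: "h *\<^sub>R q = h *\<^sub>R r + c *\<^sub>R mat 1"
    by (simp add: r_def c_def algebra_simps)
  have comm: "(h *\<^sub>R r) ** (c *\<^sub>R mat 1) = (c *\<^sub>R mat 1) ** (h *\<^sub>R r)"
    by (simp add: matrix_scalar_ac scalar_matrix_assoc[symmetric])
  have "mexp (h *\<^sub>R q) = exp c *\<^sub>R mexp (h *\<^sub>R r)"
    unfolding eq mexp_mult[OF comm] mexp_scalar by (simp add: matrix_scalar_ac)
  moreover have "0 \<le> mexp (h *\<^sub>R r) $ i $ j"
    by (rule mexp_nonneg) (simp add: h r0)
  ultimately show ?thesis by simp
qed

lemma linear_mv: "linear (\<lambda>A::real^'n^'m. A *v w)"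
  by (rule linearI) (simp_all add: matrix_vector_mult_add_rdistrib scaleR_matrix_vector_assoc)

lemma mexp_mv_sums: fixes A :: "real^'d^'d" shows "(\<lambda>k. ((1 / fact k) *\<^sub>R mpow A k) *v w) sums (mexp A *v w)"
proof -
  have "bounded_linear (\<lambda>A::real^'d^'d. A *v w)"
    using linear_mv linear_conv_bounded_linear by blast
  from bounded_linear.sums[OF this mexp_sums[of A]] show ?thesis .
qed

lemma qmatrix_row: "qmatrix q \<Longrightarrow> q *v vec c = 0"
  by (simp add: qmatrix_def matrix_vector_mult_def vec_eq_iff vec_def sum_distrib_right[symmetric])

lemma qmatrix_exp_const:
  assumes q: "qmatrix q"
  shows "mexp (h *\<^sub>R q) *v vec c = vec c"
proof -
  let ?A = "h *\<^sub>R q"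
  have A0: "?A *v vec c = 0"
    by (simp add: scaleR_matrix_vector_assoc[symmetric] qmatrix_row[OF q])
  have "mpow ?A (Suc k) *v vec c = 0" for k
  proof -
    have "mpow ?A (Suc k) = mpow ?A k ** ?A" using mpow_comm[of ?A ?A k] by simp
    then show ?thesis by (simp add: matrix_vector_mul_assoc[symmetric] A0)
  qed
  have "(\<lambda>k. ((1 / fact k) *\<^sub>R mpow ?A k) *v vec c) = (\<lambda>k. if k = 0 then vec c else 0)"
  proof (rule ext)
    fix k show "((1 / fact k) *\<^sub>R mpow ?A k) *v vec c = (if k = 0 then vec c else 0)"
    proof (cases k)
      case 0 then show ?thesis by simp
    next
      case (Suc m) then show ?thesis
        using \<open>\<And>k. mpow ?A (Suc k) *v vec c = 0\<close>[of m]
        by (simp add: scaleR_matrix_vector_assoc[symmetric])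
    qed
  qed
  with mexp_mv_sums[of ?A "vec c"] have "(\<lambda>k. if k = 0 then vec c else 0) sums (mexp ?A *v vec c)"
    by simp
  moreover have "(\<lambda>k. if k = 0 then vec c else (0::real^'d)) sums vec c"
    using sums_single[of 0 "\<lambda>_. vec c"] by simp
  ultimately show ?thesis by (rule sums_unique2)
qed



lemma mv_mono:
  assumes "\<And>i j. 0 \<le> M $ i $ j" and "u \<le> v"
  shows "M *v u \<le> (M::real^'d^'d) *v v"
  using assms unfolding less_eq_vec_def matrix_vector_mult_def
  by (auto intro!: sum_mono mult_left_mono)

lemma Sq_integrable: "(\<lambda>s. mexp (s *\<^sub>R q) *v v) integrable_on {a..b}"
  by (rule integrable_continuous_interval) (rule continuous_on_mexp_mv)

lemma Sq_integral_nonpos: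
  assumes q: "qmatrix q" and f: "fq \<le> 0" and h: "0 \<le> h"
  shows "integral {0..h} (\<lambda>s. mexp (s *\<^sub>R q) *v fq) \<le> 0"
proof -
  have "integral {0..h} (\<lambda>s. mexp (s *\<^sub>R q) *v fq) $ i \<le> 0" for i
  proof -
    have "integral {0..h} (\<lambda>s. mexp (s *\<^sub>R q) *v fq) $ i = integral {0..h} (\<lambda>s. (mexp (s *\<^sub>R q) *v fq) $ i)"
      by (rule integral_component_eq_cart[symmetric]) (rule Sq_integrable)
    also have "\<dots> \<le> integral {0..h} (\<lambda>s. 0::real)"
    proof (rule integral_le)
      show "(\<lambda>s. (mexp (s *\<^sub>R q) *v fq) $ i) integrable_on {0..h}"
        using integrable_linear[OF Sq_integrable bounded_linear_vec_nth[of i]] by (simp add: o_def)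
      show "(\<lambda>s. 0::real) integrable_on {0..h}" by (rule integrable_0)
      fix s assume "s \<in> {0..h}"
      then have "mexp (s *\<^sub>R q) *v fq \<le> mexp (s *\<^sub>R q) *v 0"
        by (intro mv_mono qmatrix_exp_nonneg[OF q] f) auto
      then show "(mexp (s *\<^sub>R q) *v fq) $ i \<le> 0" by (simp add: less_eq_vec_def)
    qed
    finally show ?thesis by simp
  qed
  then show ?thesis by (simp add: less_eq_vec_def)
qed

lemma Sq_mono:
  assumes q: "qmatrix q" and h: "0 \<le> h" and uv: "u \<le> v"
  shows "Sq q fq h u \<le> Sq q fq h v"
  unfolding Sq_def using mv_mono[OF qmatrix_exp_nonneg[OF q h] uv] by simp

lemma Sq_shift:
  assumes q: "qmatrix q"
  shows "Sq q fq h (v + vec c) = Sq q fq h v + vec c"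
  unfolding Sq_def by (simp add: matrix_vector_right_distrib qmatrix_exp_const[OF q])

lemma Sq_bound:
  assumes q: "qmatrix q" and f: "fq \<le> 0" and h: "0 \<le> h" and u: "u \<le> vec c"
  shows "Sq q fq h u \<le> vec c"
proof -
  have "Sq q fq h u \<le> Sq q fq h (vec c)" by (rule Sq_mono[OF q h u])
  also have "\<dots> = vec c + integral {0..h} (\<lambda>s. mexp (s *\<^sub>R q) *v fq)"
    unfolding Sq_def by (simp add: qmatrix_exp_const[OF q])
  also have "\<dots> \<le> vec c" using Sq_integral_nonpos[OF q f h] by simp
  finally show ?thesis .
qed

lemma mexp_add_scale: "mexp ((a + b) *\<^sub>R q) = mexp (a *\<^sub>R q) ** mexp (b *\<^sub>R q)"
proof -
  have "(a *\<^sub>R q) ** (b *\<^sub>R q) = (b *\<^sub>R q) ** (a *\<^sub>R q)"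
    by (simp add: matrix_scalar_ac scalar_matrix_assoc[symmetric])
  from mexp_mult[OF this] show ?thesis by (simp add: scaleR_add_left)
qed

lemma Sq_comp:
  assumes a: "0 \<le> a" and b: "0 \<le> b"
  shows "Sq q fq (a + b) u = Sq q fq a (Sq q fq b u)"
proof -
  let ?M = "\<lambda>s. mexp (s *\<^sub>R q)"
  let ?g = "\<lambda>s. ?M s *v fq"
  have "?M a *v integral {0..b} ?g = integral {0..b} (\<lambda>s. ?M a *v ?g s)"
    using integral_linear[OF Sq_integrable matrix_vector_mul_bounded_linear[of "?M a"]]
    by (simp add: o_def)
  also have "\<dots> = integral {0..b} (?g \<circ> (+) a)"
    by (simp add: o_def matrix_vector_mul_assoc mexp_add_scale)
  also have "\<dots> = integral {a..a+b} ?g"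
    using integral_shift_Icc_real[of 0 b ?g a] by (simp add: add.commute)
  finally have 1: "?M a *v integral {0..b} ?g = integral {a..a+b} ?g" .
  have 2: "integral {0..a} ?g + integral {a..a+b} ?g = integral {0..a+b} ?g"
    by (rule Henstock_Kurzweil_Integration.integral_combine) (use a b Sq_integrable in auto)
  show ?thesis
    unfolding Sq_def
    by (simp add: matrix_vector_right_distrib matrix_vector_mul_assoc mexp_add_scale 1 2[symmetric] algebra_simps del: scaleR_add_left)
qed



definition ub :: "real^'d \<Rightarrow> real" where "ub u = Max (range (\<lambda>i. u $ i))"

lemma ub_le: "u \<le> vec (ub u)"
  unfolding less_eq_vec_def ub_def vec_def by (auto intro: Max_ge)

locale nisio =
  fixes P :: "(real^'d^'d) set" and f :: "real^'d^'d \<Rightarrow> real^'d"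
  assumes Q: "\<And>q. q \<in> P \<Longrightarrow> qmatrix q"
    and Pne: "P \<noteq> {}"
    and fneg: "\<And>q. q \<in> P \<Longrightarrow> f q \<le> 0"
begin

lemma Eh_bdd: "0 \<le> h \<Longrightarrow> bdd_above ((\<lambda>q. Sq q (f q) h u) ` P)"
  by (rule bdd_aboveI[where M="vec (ub u)"]) (auto intro: Sq_bound Q fneg ub_le)

lemma Eh_upper: "0 \<le> h \<Longrightarrow> q \<in> P \<Longrightarrow> Sq q (f q) h u \<le> Eh P f h u"
  unfolding Eh_def by (rule cSUP_upper[OF _ Eh_bdd])

lemma Eh_least: "(\<And>q. q \<in> P \<Longrightarrow> Sq q (f q) h u \<le> w) \<Longrightarrow> Eh P f h u \<le> w"
  unfolding Eh_def by (rule cSUP_least[OF Pne])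

lemma Eh_mono: "0 \<le> h \<Longrightarrow> u \<le> v \<Longrightarrow> Eh P f h u \<le> Eh P f h v"
  by (rule Eh_least) (meson Eh_upper Q Sq_mono order_trans)

lemma Eh_bound: "0 \<le> h \<Longrightarrow> u \<le> vec c \<Longrightarrow> Eh P f h u \<le> vec c"
  by (rule Eh_least) (auto intro: Sq_bound Q fneg)

lemma Eh_shift: "0 \<le> h \<Longrightarrow> u \<le> v + vec c \<Longrightarrow> Eh P f h u \<le> Eh P f h v + vec c"
proof (rule Eh_least)
  fix q assume h: "0 \<le> h" and uv: "u \<le> v + vec c" and q: "q \<in> P"
  have "Sq q (f q) h u \<le> Sq q (f q) h (v + vec c)" by (rule Sq_mono[OF Q[OF q] h uv])
  also have "\<dots> = Sq q (f q) h v + vec c" by (rule Sq_shift[OF Q[OF q]])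
  also have "\<dots> \<le> Eh P f h v + vec c" using Eh_upper[OF h q] by simp
  finally show "Sq q (f q) h u \<le> Eh P f h v + vec c" .
qed

lemma Eh_comp: "0 \<le> a \<Longrightarrow> 0 \<le> b \<Longrightarrow> Eh P f (a + b) u \<le> Eh P f a (Eh P f b u)"
proof (rule Eh_least)
  fix q assume a: "0 \<le> a" and b: "0 \<le> b" and q: "q \<in> P"
  have "Sq q (f q) (a + b) u = Sq q (f q) a (Sq q (f q) b u)" by (rule Sq_comp[OF a b])
  also have "\<dots> \<le> Sq q (f q) a (Eh P f b u)" by (rule Sq_mono[OF Q[OF q] a Eh_upper[OF b q]])
  also have "\<dots> \<le> Eh P f a (Eh P f b u)" by (rule Eh_upper[OF a q])
  finally show "Sq q (f q) (a + b) u \<le> Eh P f a (Eh P f b u)" .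
qed

lemma Elist_mono: "sorted xs \<Longrightarrow> u \<le> v \<Longrightarrow> Elist P f xs u \<le> Elist P f xs v"
proof (induction xs rule: induct_list012)
  case (3 a b rest)
  then show ?case by (auto intro: Eh_mono)
qed auto

lemma Elist_bound: "sorted xs \<Longrightarrow> u \<le> vec c \<Longrightarrow> Elist P f xs u \<le> vec c"
proof (induction xs rule: induct_list012)
  case (3 a b rest)
  then show ?case by (auto intro: Eh_bound)
qed auto

lemma Elist_shift: "sorted xs \<Longrightarrow> u \<le> v + vec c \<Longrightarrow> Elist P f xs u \<le> Elist P f xs v + vec c"
proof (induction xs rule: induct_list012)
  case (3 a b rest)
  then show ?case by (auto intro: Eh_shift)
qed auto

lemma Elist_insort:
  "sorted (a # rest) \<Longrightarrow> a < s \<Longrightarrow> (\<exists>y\<in>set rest. s < y) \<Longrightarrow>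
   Elist P f (a # rest) u \<le> Elist P f (insort s (a # rest)) u"
proof (induction rest arbitrary: a)
  case Nil then show ?case by simp
next
  case (Cons b rest')
  show ?case
  proof (cases "s \<le> b")
    case True
    have "Elist P f (a # b # rest') u = Eh P f ((s - a) + (b - s)) (Elist P f (b # rest') u)" by simp
    also have "\<dots> \<le> Eh P f (s - a) (Eh P f (b - s) (Elist P f (b # rest') u))"
      by (rule Eh_comp) (use Cons.prems True in auto)
    finally show ?thesis using True Cons.prems by simp
  next
    case False
    have "\<exists>y\<in>set rest'. s < y" using Cons.prems False by auto
    then have IH: "Elist P f (b # rest') u \<le> Elist P f (insort s (b # rest')) u"
      using Cons.IH[of b] Cons.prems False by auto
    have ins2: "insort s (b # rest') = b # insort s rest'"
      using False by auto
    have ins: "insort s (a # b # rest') = a # b # insort s rest'"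
      using False Cons.prems by auto
    have "Eh P f (b - a) (Elist P f (b # rest') u) \<le> Eh P f (b - a) (Elist P f (insort s (b # rest')) u)"
      by (rule Eh_mono[OF _ IH]) (use Cons.prems in auto)
    then have "Elist P f (a # b # rest') u \<le> Elist P f (a # b # insort s rest') u"
      unfolding ins2 by simp
    then show ?thesis unfolding ins .
  qed
qed

end



lemma partsD:
  assumes "\<pi> \<in> partitions_t t"
  shows "finite \<pi>" "\<pi> \<subseteq> {0..}" "0 \<in> \<pi>" "t \<in> \<pi>" "\<And>x. x \<in> \<pi> \<Longrightarrow> 0 \<le> x \<and> x \<le> t"
proof -
  show fin: "finite \<pi>" "\<pi> \<subseteq> {0..}" "0 \<in> \<pi>" using assms by (auto simp: partitions_t_def partitions_def)
  have M: "Max \<pi> = t" using assms by (simp add: partitions_t_def)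
  show "t \<in> \<pi>" using Max_in[OF fin(1)] fin(3) M by auto
  show "\<And>x. x \<in> \<pi> \<Longrightarrow> 0 \<le> x \<and> x \<le> t" using fin M Max_ge[OF fin(1)] by auto
qed

lemma partsI:
  assumes "finite \<pi>" "\<pi> \<subseteq> {0..t}" "0 \<in> \<pi>" "t \<in> \<pi>"
  shows "\<pi> \<in> partitions_t t"
  using assms unfolding partitions_t_def partitions_def
  by (auto intro!: Max_eqI)

lemma sl_cons:
  assumes "finite X" "0 \<in> X" "X \<subseteq> {0..}"
  shows "sorted_list_of_set X = (0::real) # sorted_list_of_set (X - {0})"
proof -
  have "Min X = 0" using assms by (intro Min_eqI) auto
  then show ?thesis using sorted_list_of_set_nonempty[of X] assms by auto
qed

context nisio begin

lemma Epi_eq: "\<pi> \<in> partitions_t t \<Longrightarrow> 0 < t \<Longrightarrow> Epi P f \<pi> u = Elist P f (sorted_list_of_set \<pi>) u"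
  unfolding Epi_def using partsD(4)[of \<pi> t] by auto

lemma refine_insert:
  assumes X: "finite X" "0 \<in> X" "X \<subseteq> {0..}" "t \<in> X" and s: "0 < s" "s < t" "s \<notin> X"
  shows "Elist P f (sorted_list_of_set X) u \<le> Elist P f (sorted_list_of_set (insert s X)) u"
proof -
  have ins: "sorted_list_of_set (insert s X) = insort s (sorted_list_of_set X)"
    using X s by (simp add: sorted_list_of_set_insert)
  have "t \<in> set (sorted_list_of_set (X - {0}))" using X s by auto
  then show ?thesis unfolding ins sl_cons[OF X(1-3)]
    by (intro Elist_insort) (use s X in \<open>auto intro: sorted_sorted_list_of_set\<close>)
qed

lemma refine_union:
  assumes pi: "\<pi> \<in> partitions_t t" and t: "0 < t" and F: "finite F" "F \<subseteq> {0<..<t}"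
  shows "Elist P f (sorted_list_of_set \<pi>) u \<le> Elist P f (sorted_list_of_set (\<pi> \<union> F)) u"
  using F
proof (induction F rule: finite_induct)
  case empty then show ?case by simp
next
  case (insert s F)
  show ?case
  proof (cases "s \<in> \<pi> \<union> F")
    case True
    then have "\<pi> \<union> insert s F = \<pi> \<union> F" by auto
    then show ?thesis using insert by simp
  next
    case False
    have "Elist P f (sorted_list_of_set (\<pi> \<union> F)) u \<le> Elist P f (sorted_list_of_set (insert s (\<pi> \<union> F))) u"
      by (rule refine_insert[where t=t]) (use insert False partsD[OF pi] in auto)
    then show ?thesis using insert by simp
  qed
qed

lemma Epi_refine:
  assumes pi: "\<pi> \<in> partitions_t t" "\<pi>' \<in> partitions_t t" "\<pi> \<subseteq> \<pi>'" and t: "0 < t"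
  shows "Epi P f \<pi> u \<le> Epi P f \<pi>' u"
proof -
  have eq: "\<pi>' = \<pi> \<union> (\<pi>' - \<pi>)" using pi by auto
  have sub: "\<pi>' - \<pi> \<subseteq> {0<..<t}"
  proof
    fix x assume x: "x \<in> \<pi>' - \<pi>"
    then have "x \<noteq> 0" "x \<noteq> t" using partsD(3,4)[OF pi(1)] by auto
    moreover have "0 \<le> x \<and> x \<le> t" using x partsD(5)[OF pi(2)] by auto
    ultimately show "x \<in> {0<..<t}" by auto
  qed
  have "Elist P f (sorted_list_of_set \<pi>) u \<le> Elist P f (sorted_list_of_set (\<pi> \<union> (\<pi>' - \<pi>))) u"
    by (rule refine_union[OF pi(1) t _ sub]) (use partsD(1)[OF pi(2)] in auto)
  then show ?thesis using Epi_eq[OF pi(1) t] Epi_eq[OF pi(2) t] eq by simp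
qed

lemma Epi_bound: "\<pi> \<in> partitions_t t \<Longrightarrow> 0 < t \<Longrightarrow> u \<le> vec c \<Longrightarrow> Epi P f \<pi> u \<le> vec c"
  by (simp add: Epi_eq Elist_bound)

lemma Epi_shift: "\<pi> \<in> partitions_t t \<Longrightarrow> 0 < t \<Longrightarrow> u \<le> v + vec c \<Longrightarrow> Epi P f \<pi> u \<le> Epi P f \<pi> v + vec c"
  by (simp add: Epi_eq Elist_shift)

end



context nisio begin

lemma parts_ne: "0 < t \<Longrightarrow> {0, t} \<in> partitions_t t"
  by (rule partsI) auto

lemma Epi_bdd: "0 < t \<Longrightarrow> bdd_above ((\<lambda>\<pi>. Epi P f \<pi> u) ` partitions_t t)"
  by (rule bdd_aboveI[where M="vec (ub u)"]) (auto intro: Epi_bound ub_le)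

lemma Epi_le_N: "0 < t \<Longrightarrow> \<pi> \<in> partitions_t t \<Longrightarrow> Epi P f \<pi> u \<le> Nisio P f t u"
  unfolding Nisio_def by (rule cSUP_upper[OF _ Epi_bdd])

lemma N_shift:
  assumes t: "0 < t" and uv: "u \<le> v + vec c"
  shows "Nisio P f t u \<le> Nisio P f t v + vec c"
  unfolding Nisio_def[of P f t u]
proof (rule cSUP_least)
  show "partitions_t t \<noteq> {}" using parts_ne[OF t] by auto
  fix \<pi> assume pi: "\<pi> \<in> partitions_t t"
  have "Epi P f \<pi> u \<le> Epi P f \<pi> v + vec c" by (rule Epi_shift[OF pi t uv])
  also have "\<dots> \<le> Nisio P f t v + vec c" using Epi_le_N[OF t pi] by simp
  finally show "Epi P f \<pi> u \<le> Nisio P f t v + vec c" .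
qed

lemma N_comp: "Nisio P f t u $ i = (SUP \<pi>\<in>partitions_t t. Epi P f \<pi> u $ i)"
  unfolding Nisio_def Sup_vec_def by (simp add: image_comp)

lemma approx:
  assumes t: "0 < t" and e: "0 < e"
  shows "\<exists>\<pi>\<in>partitions_t t. \<forall>i. Nisio P f t u $ i - e < Epi P f \<pi> u $ i"
proof -
  have "\<exists>\<pi>\<in>partitions_t t. Nisio P f t u $ i - e < Epi P f \<pi> u $ i" for i
  proof -
    have bdd: "bdd_above ((\<lambda>\<pi>. Epi P f \<pi> u $ i) ` partitions_t t)"
      by (rule bdd_aboveI[where M="ub u"])
         (use Epi_bound[OF _ t ub_le[of u]] in \<open>auto simp: less_eq_vec_def vec_def\<close>)
    have "Nisio P f t u $ i - e < (SUP \<pi>\<in>partitions_t t. Epi P f \<pi> u $ i)"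
      using e by (simp add: N_comp)
    then show ?thesis
      using less_cSUP_iff[OF _ bdd] parts_ne[OF t] by blast
  qed
  then obtain p where p: "\<And>i. p i \<in> partitions_t t" "\<And>i. Nisio P f t u $ i - e < Epi P f (p i) u $ i"
    by metis
  define \<rho> where "\<rho> = (\<Union>i. p i)"
  have rho: "\<rho> \<in> partitions_t t"
    unfolding \<rho>_def by (rule partsI) (use partsD[OF p(1)] in \<open>auto\<close>)
  have "Nisio P f t u $ i - e < Epi P f \<rho> u $ i" for i
  proof -
    have "Epi P f (p i) u \<le> Epi P f \<rho> u"
      by (rule Epi_refine[OF p(1) rho _ t]) (auto simp: \<rho>_def)
    then show ?thesis using p(2)[of i] by (simp add: less_eq_vec_def) (smt (verit))
  qed
  then show ?thesis using rho by blast
qed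

end



context nisio begin

lemma main:
  assumes t: "0 < t"
  shows "\<exists>\<pi>s :: nat \<Rightarrow> real set. (\<forall>n. \<pi>s n \<in> partitions_t t) \<and>
           (\<forall>u0::real^'d. bdd_above ((\<lambda>\<pi>. Epi P f \<pi> u0) ` partitions_t t) \<and>
              incseq (\<lambda>n. Epi P f (\<pi>s n) u0) \<and>
              (\<lambda>n. Epi P f (\<pi>s n) u0) \<longlonglongrightarrow> Nisio P f t u0)"
proof -
  obtain D :: "(real^'d) set" where D: "countable D" "\<And>X. open X \<Longrightarrow> X \<noteq> {} \<Longrightarrow> \<exists>d\<in>D. d \<in> X"
    using countable_dense_exists by blast
  have Dne: "D \<noteq> {}" using D(2)[of UNIV] by auto
  have "\<forall>u k. \<exists>\<pi>\<in>partitions_t t. \<forall>i. Nisio P f t u $ i - 1 / real (Suc k) < Epi P f \<pi> u $ i"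
    using approx[OF t] by simp
  then obtain \<rho> where rho: "\<And>u k. \<rho> u k \<in> partitions_t t"
    "\<And>u k i. Nisio P f t u $ i - 1 / real (Suc k) < Epi P f (\<rho> u k) u $ i"
    by metis
  define g where "g = from_nat_into (D \<times> (UNIV :: nat set))"
  have grange: "range g = D \<times> UNIV"
    unfolding g_def by (rule range_from_nat_into) (use D(1) Dne in auto)
  define \<pi>s where "\<pi>s n = (\<Union>m\<in>{..n}. \<rho> (fst (g m)) (snd (g m)))" for n
  have pis: "\<pi>s n \<in> partitions_t t" for n
    unfolding \<pi>s_def
    by (rule partsI) (use partsD[OF rho(1)] in \<open>auto\<close>)
  have pis_mono: "m \<le> n \<Longrightarrow> \<pi>s m \<subseteq> \<pi>s n" for m n
    unfolding \<pi>s_def by (auto intro: order_trans)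
  have rho_sub: "m \<le> n \<Longrightarrow> \<rho> (fst (g m)) (snd (g m)) \<subseteq> \<pi>s n" for m n
    unfolding \<pi>s_def by auto
  show ?thesis
  proof (intro exI conjI allI)
    show "\<pi>s n \<in> partitions_t t" for n by (rule pis)
    fix u0 :: "real^'d"
    show "bdd_above ((\<lambda>\<pi>. Epi P f \<pi> u0) ` partitions_t t)" by (rule Epi_bdd[OF t])
    show "incseq (\<lambda>n. Epi P f (\<pi>s n) u0)"
      by (rule incseq_SucI, rule Epi_refine[OF pis pis pis_mono t]) simp
    show "(\<lambda>n. Epi P f (\<pi>s n) u0) \<longlonglongrightarrow> Nisio P f t u0"
    proof (rule vec_tendstoI, rule LIMSEQ_I)
      fix i and r :: real assume r: "0 < r"
      define \<delta> where "\<delta> = r / 4"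
      have dpos: "0 < \<delta>" using r by (simp add: \<delta>_def)
      obtain d where d: "d \<in> D" "d \<in> ball u0 \<delta>"
        using D(2)[of "ball u0 \<delta>"] dpos by auto
      have comp: "\<bar>u0 $ j - d $ j\<bar> < \<delta>" for j
        using d(2) component_le_norm_cart[of "u0 - d" j] by (simp add: dist_norm)
      have dle: "d \<le> u0 + vec \<delta>" and ule: "u0 \<le> d + vec \<delta>"
      proof -
        have "d $ j \<le> u0 $ j + \<delta>" "u0 $ j \<le> d $ j + \<delta>" for j
          using comp[of j] by linarith+
        then show "d \<le> u0 + vec \<delta>" "u0 \<le> d + vec \<delta>"
          by (auto simp: less_eq_vec_def vec_def)
      qed
      obtain k where k: "inverse (real (Suc k)) < \<delta>" using reals_Archimedean[OF dpos] by blast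
      obtain m where m: "g m = (d, k)" using grange d(1) by (metis UNIV_I mem_Sigma_iff rangeE)
      show "\<exists>no. \<forall>n\<ge>no. norm (Epi P f (\<pi>s n) u0 $ i - Nisio P f t u0 $ i) < r"
      proof (intro exI allI impI)
        fix n assume n: "m \<le> n"
        have a: "Epi P f (\<pi>s n) d \<le> Epi P f (\<pi>s n) u0 + vec \<delta>"
          by (rule Epi_shift[OF pis t dle])
        have b: "Epi P f (\<rho> d k) d \<le> Epi P f (\<pi>s n) d"
          using Epi_refine[OF rho(1) pis rho_sub[OF n] t] m by simp
        have c: "Nisio P f t u0 \<le> Nisio P f t d + vec \<delta>"
          by (rule N_shift[OF t ule])
        have e: "Epi P f (\<pi>s n) u0 \<le> Nisio P f t u0" by (rule Epi_le_N[OF t pis])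
        have "Nisio P f t d $ i - 1 / real (Suc k) < Epi P f (\<rho> d k) d $ i" by (rule rho(2))
        moreover have "Epi P f (\<pi>s n) d $ i \<le> Epi P f (\<pi>s n) u0 $ i + \<delta>"
          using a by (simp add: less_eq_vec_def vec_def)
        moreover have "Epi P f (\<rho> d k) d $ i \<le> Epi P f (\<pi>s n) d $ i"
          using b by (simp add: less_eq_vec_def)
        moreover have "Nisio P f t u0 $ i \<le> Nisio P f t d $ i + \<delta>"
          using c by (simp add: less_eq_vec_def vec_def)
        moreover have "Epi P f (\<pi>s n) u0 $ i \<le> Nisio P f t u0 $ i"
          using e by (simp add: less_eq_vec_def)
        moreover have "1 / real (Suc k) < \<delta>" using k by (simp add: divide_inverse)
        ultimately show "norm (Epi P f (\<pi>s n) u0 $ i - Nisio P f t u0 $ i) < r"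
          unfolding \<delta>_def real_norm_def by linarith
      qed
    qed
  qed
qed

end


theorem mainTheorem6:
  fixes P :: "(real^'d^'d) set" and f :: "real^'d^'d \<Rightarrow> real^'d" and q0 :: "real^'d^'d"
    and t :: real
  assumes Q: "\<forall>q\<in>P. qmatrix q"
    and q0: "q0 \<in> P" "f q0 = 0" "(SUP q\<in>P. f q) = 0"
    and fin: "\<forall>u::real^'d. bdd_above ((\<lambda>q. q *v u + f q) ` P)"
    and t: "t > 0"
  shows "\<exists>\<pi>s :: nat \<Rightarrow> real set. (\<forall>n. \<pi>s n \<in> partitions_t t) \<and>
           (\<forall>u0::real^'d. bdd_above ((\<lambda>\<pi>. Epi P f \<pi> u0) ` partitions_t t) \<and>
              incseq (\<lambda>n. Epi P f (\<pi>s n) u0) \<and>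
              (\<lambda>n. Epi P f (\<pi>s n) u0) \<longlonglongrightarrow> Nisio P f t u0)"
proof -
  have bdd: "bdd_above (f ` P)" using fin[rule_format, of 0] by simp
  have fle: "f q \<le> 0" if q: "q \<in> P" for q
  proof -
    have "f q \<le> (SUP q\<in>P. f q)" by (rule cSUP_upper[OF q bdd])
    then show ?thesis using q0(3) by simp
  qed
  interpret nisio P f
    by unfold_locales (use Q q0(1) fle in auto)
  show ?thesis by (rule main[OF t])
qed

end
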